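(* Let $\varepsilon>0$ and $\delta\in(0,1)$, and let $\pi_{\mathrm{opt}}:\mathbb{N}\to[0,1]$ be defined by $\pi_{\mathrm{opt}}(0)=0$ and $\pi_{\mathrm{opt}}(n+1)=\min\left(e^{\varepsilon}\pi_{\mathrm{opt}}(n)+\delta,\;1-e^{-\varepsilon}(1-\pi_{\mathrm{opt}}(n)-\delta),\;1\right)$ for $n\ge0$. Let $n_1$ be the largest integer $n\ge1$ such that $\pi_{\mathrm{opt}}(n-1)\le \frac{1-\delta}{e^{\varepsilon}+1}$ (equivalently, the last index $n$ for which the first argument $e^{\varepsilon}\pi_{\mathrm{opt}}(n-1)+\delta$ of the minimum is the active one). Then \[ n_1=1+\left\lfloor\frac{1}{\varepsilon}\ln\left(\frac{e^{\varepsilon}+2\delta-1}{\delta(e^{\varepsilon}+1)}\right)\right\rfloor . \]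
   Context: $\mathbb{N}=\{0,1,2,\dots\}$. $\pi_{\mathrm{opt}}$ is the optimal partition selection primitive for $(\varepsilon,\delta)$-differential privacy: the pointwise largest $\pi:\mathbb{N}\to[0,1]$ with $\pi(0)=0$ such that releasing a partition with $n$ users with probability $\pi(n)$ is $(\varepsilon,\delta)$-DP with respect to adding or removing one user; it satisfies the recurrence stated. The value $\frac{1-\delta}{e^{\varepsilon}+1}$ is the point $x$ where $e^{\varepsilon}x+\delta=1-e^{-\varepsilon}(1-x-\delta)$. *)

theory Defs
  imports "HOL-Analysis.Analysis"
begin

fun pi_opt :: "real \<Rightarrow> real \<Rightarrow> nat \<Rightarrow> real" where
  "pi_opt \<epsilon> \<delta> 0 = 0"
| "pi_opt \<epsilon> \<delta> (Suc n) =
     min (exp \<epsilon> * pi_opt \<epsilon> \<delta> n + \<delta>)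
         (min (1 - exp (-\<epsilon>) * (1 - pi_opt \<epsilon> \<delta> n - \<delta>)) 1)"

definition n1 :: "real \<Rightarrow> real \<Rightarrow> nat" where
  "n1 \<epsilon> \<delta> = (GREATEST n. n \<ge> 1 \<and> pi_opt \<epsilon> \<delta> (n - 1) \<le> (1 - \<delta>) / (exp \<epsilon> + 1))"

end

theory Submission
  imports Defs
begin

lemma step_lin:
  fixes a d p :: real
  assumes a: "a > 1" and d: "0 < d" "d < 1" and p: "0 \<le> p" "p \<le> (1 - d) / (a + 1)"
  shows "a * p + d \<le> 1 - (1/a) * (1 - p - d)" "a * p + d \<le> 1"
proof -
  have ap: "(a + 1) * p \<le> 1 - d" using p a by (simp add: pos_le_divide_eq mult.commute)
  have "(a - 1) * ((a + 1) * p) \<le> (a - 1) * (1 - d)"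
    using a ap by (intro mult_left_mono) auto
  hence h: "a * (a * p + d) \<le> a - (1 - p - d)" by (simp add: algebra_simps)
  have "a * p + d \<le> (a - (1 - p - d)) / a" using a h by (simp add: pos_le_divide_eq mult.commute)
  also have "\<dots> = 1 - (1/a) * (1 - p - d)" using a by (simp add: field_simps)
  finally show "a * p + d \<le> 1 - (1/a) * (1 - p - d)" .
  have "a * p \<le> (a+1) * p" using p by (simp add: algebra_simps)
  thus "a * p + d \<le> 1" using ap by linarith
qed

lemma step_gt:
  fixes a d p :: real
  assumes a: "a > 1" and d: "0 < d" "d < 1" and p: "p > (1 - d) / (a + 1)"
  shows "min (a * p + d) (min (1 - (1/a) * (1 - p - d)) 1) > (1 - d) / (a + 1)"
proof -
  let ?x = "(1 - d) / (a + 1)"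
  have x0: "?x \<ge> 0" using a d by simp
  have x1: "?x < 1" using a d by (simp add: field_simps)
  have l: "a * ?x + d \<le> 1 - (1/a) * (1 - ?x - d)" using step_lin[OF a d x0] by simp
  have "?x \<le> a * ?x" using a x0 mult_right_mono[of 1 a "?x"] by simp
  hence e: "a * ?x + d > ?x" using d by linarith
  have "a * ?x < a * p" using a p mult_strict_left_mono[of "?x" p a] by linarith
  hence "a * p + d > ?x" using e by linarith
  moreover have "(1/a) * (1 - p - d) < (1/a) * (1 - ?x - d)"
    using a p by (intro mult_strict_left_mono) auto
  ultimately show ?thesis using x1 l e by simp
qed

theorem lemma4:
  fixes \<epsilon> \<delta> :: real
  assumes "\<epsilon> > 0" and "0 < \<delta>" and "\<delta> < 1"
  shows "int (n1 \<epsilon> \<delta>) =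
    1 + \<lfloor>(1 / \<epsilon>) * ln ((exp \<epsilon> + 2 * \<delta> - 1) / (\<delta> * (exp \<epsilon> + 1)))\<rfloor>"
proof -
  define a where "a = exp \<epsilon>"
  have a1: "a > 1" using assms(1) a_def by simp
  have d: "0 < \<delta>" "\<delta> < 1" using assms by auto
  define x where "x = (1 - \<delta>) / (a + 1)"
  define R where "R = (a + 2 * \<delta> - 1) / (\<delta> * (a + 1))"
  define g where "g k = \<delta> * (a ^ k - 1) / (a - 1)" for k :: nat
  let ?p = "pi_opt \<epsilon> \<delta>"
  have rec: "?p (Suc k) = min (a * ?p k + \<delta>) (min (1 - (1/a) * (1 - ?p k - \<delta>)) 1)" for k
    by (simp add: a_def exp_minus field_simps)
  have gt: "?p k > x \<Longrightarrow> ?p (Suc k) > x" for k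
    using step_gt[OF a1 d, of "?p k"] rec[of k] unfolding x_def by simp
  have gtm: "m \<le> k \<Longrightarrow> ?p m > x \<Longrightarrow> ?p k > x" for m k
    by (induction k rule: dec_induct) (use gt in blast)+
  have g0: "g k \<ge> 0" for k
    using a1 d by (simp add: g_def one_le_power)
  have formula: "(\<forall>j<k. ?p j \<le> x) \<Longrightarrow> ?p k = g k" for k
  proof (induction k)
    case 0 then show ?case by (simp add: g_def)
  next
    case (Suc k)
    hence pk: "?p k = g k" and le: "?p k \<le> x" by auto
    have "a * ?p k + \<delta> \<le> 1 - (1/a) * (1 - ?p k - \<delta>)" "a * ?p k + \<delta> \<le> 1"
      using step_lin[OF a1 d, of "?p k"] le g0[of k] pk unfolding x_def by auto
    hence "?p (Suc k) = a * g k + \<delta>" using rec[of k] pk by simp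
    also have "\<dots> = g (Suc k)" using a1 by (simp add: g_def field_simps)
    finally show ?case .
  qed
  have gx: "g k \<le> x \<longleftrightarrow> a ^ k \<le> R" for k
  proof -
    have "g k \<le> x \<longleftrightarrow> \<delta> * (a ^ k - 1) * (a + 1) \<le> (1 - \<delta>) * (a - 1)"
      using a1 by (simp add: g_def x_def divide_simps)
    also have "\<dots> \<longleftrightarrow> a ^ k * (\<delta> * (a + 1)) \<le> a + 2 * \<delta> - 1"
      by (simp add: algebra_simps)
    also have "\<dots> \<longleftrightarrow> a ^ k \<le> R"
      using a1 d by (simp add: R_def pos_le_divide_eq)
    finally show ?thesis .
  qed
  have char: "?p k \<le> x \<longleftrightarrow> a ^ k \<le> R" for k
  proof
    assume h: "?p k \<le> x"
    have "\<forall>j<k. ?p j \<le> x" using gtm h by (meson linorder_not_le less_imp_le)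
    thus "a ^ k \<le> R" using formula h gx by metis
  next
    assume "a ^ k \<le> R"
    thus "?p k \<le> x"
    proof (induction k rule: less_induct)
      case (less k)
      have "\<forall>j<k. ?p j \<le> x"
      proof (intro allI impI)
        fix j assume "j < k"
        hence "a ^ j \<le> a ^ k" using a1 by (simp add: power_increasing)
        thus "?p j \<le> x" using less \<open>j < k\<close> by auto
      qed
      thus ?case using formula gx less.prems by metis
    qed
  qed
  define F where "F = \<lfloor>(1 / \<epsilon>) * ln R\<rfloor>"
  have R1: "R \<ge> 1"
  proof -
    have "(a - 1) * (1 - \<delta>) \<ge> 0" using a1 d by simp
    hence "\<delta> * (a + 1) \<le> a + 2 * \<delta> - 1" by (simp add: algebra_simps)
    thus ?thesis using a1 d by (simp add: R_def)
  qed
  have F0: "F \<ge> 0" using R1 assms(1) by (simp add: F_def)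
  have kR: "a ^ k \<le> R \<longleftrightarrow> int k \<le> F" for k
  proof -
    have "a ^ k = exp (real k * \<epsilon>)" by (simp add: a_def exp_of_nat_mult)
    hence "a ^ k \<le> R \<longleftrightarrow> real k * \<epsilon> \<le> ln R"
      using R1 ln_ge_iff[of R "real k * \<epsilon>"] by simp
    also have "\<dots> \<longleftrightarrow> real k \<le> (1 / \<epsilon>) * ln R"
      using assms(1) by (simp add: field_simps)
    also have "\<dots> \<longleftrightarrow> int k \<le> F" unfolding F_def by (simp add: le_floor_iff)
    finally show ?thesis .
  qed
  have "n1 \<epsilon> \<delta> = nat F + 1"
    unfolding n1_def
  proof (rule Greatest_equality)
    show "1 \<le> nat F + 1 \<and> ?p (nat F + 1 - 1) \<le> (1 - \<delta>) / (exp \<epsilon> + 1)"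
      using char[of "nat F"] kR[of "nat F"] F0 by (simp add: x_def a_def)
  next
    fix y assume "1 \<le> y \<and> ?p (y - 1) \<le> (1 - \<delta>) / (exp \<epsilon> + 1)"
    hence "1 \<le> y" "int (y - 1) \<le> F"
      using char[of "y-1"] kR[of "y-1"] by (auto simp: x_def a_def)
    thus "y \<le> nat F + 1" by linarith
  qed
  thus ?thesis using F0 by (simp add: F_def R_def a_def)
qed

end
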